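(* Let $m$ be an even positive integer. Then $$\bigcup_{\gamma\in M_1^m}\Gamma_0(2)^+\gamma=\bigcup_{\gamma\in M_2^m}\Gamma_0(2)^+\gamma w_2.$$
   Context: Matrices are in $GL_2^+(\mathbb{R})$ considered up to sign; $\Gamma_0(2)=\{\begin{bmatrix}a&b\\c&d\end{bmatrix}\in SL_2(\mathbb{Z}): c\equiv0\pmod 2\}$, $w_2=2^{-1/2}\begin{bmatrix}0&-1\\2&0\end{bmatrix}$, $\Gamma_0(2)^+$ is the group generated by $\Gamma_0(2)$ and $w_2$. With integers $x,z>0$, $y$: $M_1^m=\{\begin{bmatrix}x&y\\0&z\end{bmatrix}: xz=m,\ 0\leq y<z,\ \gcd(x,y,z)=1,\ x\text{ odd}\}$, $S_1^m=\{\begin{bmatrix}x&y\\0&z\end{bmatrix}: xz=m,\ 0\leq y<z,\ \gcd(x,y,z)=1,\ z\text{ odd}\}$, $S_2^m=\{2^{-1/2}\begin{bmatrix}x&y\\0&z\end{bmatrix}: xz=2m,\ 0\leq y<z,\ \gcd(x,y,z)=1,\ x,z\text{ even}\}$, $M_2^m=S_1^m\cup S_2^m$. *)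

theory Defs
  imports "HOL-Analysis.Analysis"
begin

text \<open>Since -I lies in Gamma0(2), every right coset of Gamma0(2)^+
  is closed under sign, so comparing sets of matrices is the same as comparing them up to sign.\<close>

definition mat2 :: "real \<Rightarrow> real \<Rightarrow> real \<Rightarrow> real \<Rightarrow> real^2^2" where
  "mat2 a b c d = vector [vector [a, b], vector [c, d]]"

definition Gamma0_2 :: "(real^2^2) set" where
  "Gamma0_2 = {mat2 (of_int a) (of_int b) (of_int c) (of_int d) | a b c d :: int.
                 a * d - b * c = 1 \<and> even c}"

definition w2 :: "real^2^2" where
  "w2 = (1 / sqrt 2) *\<^sub>R mat2 0 (-1) 2 0"

inductive_set Gamma0_2_plus :: "(real^2^2) set" where
  gen_G: "A \<in> Gamma0_2 \<Longrightarrow> A \<in> Gamma0_2_plus"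
| gen_w: "w2 \<in> Gamma0_2_plus"
| mult: "A \<in> Gamma0_2_plus \<Longrightarrow> B \<in> Gamma0_2_plus \<Longrightarrow> A ** B \<in> Gamma0_2_plus"
| inv: "A \<in> Gamma0_2_plus \<Longrightarrow> matrix_inv A \<in> Gamma0_2_plus"

definition M1 :: "int \<Rightarrow> (real^2^2) set" where
  "M1 m = {mat2 (of_int x) (of_int y) 0 (of_int z) | x y z :: int.
             x > 0 \<and> z > 0 \<and> x * z = m \<and> 0 \<le> y \<and> y < z \<and> gcd x (gcd y z) = 1 \<and> odd x}"

definition S1 :: "int \<Rightarrow> (real^2^2) set" where
  "S1 m = {mat2 (of_int x) (of_int y) 0 (of_int z) | x y z :: int.
             x > 0 \<and> z > 0 \<and> x * z = m \<and> 0 \<le> y \<and> y < z \<and> gcd x (gcd y z) = 1 \<and> odd z}"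

definition S2 :: "int \<Rightarrow> (real^2^2) set" where
  "S2 m = {(1 / sqrt 2) *\<^sub>R mat2 (of_int x) (of_int y) 0 (of_int z) | x y z :: int.
             x > 0 \<and> z > 0 \<and> x * z = 2 * m \<and> 0 \<le> y \<and> y < z \<and> gcd x (gcd y z) = 1
             \<and> even x \<and> even z}"

definition M2 :: "int \<Rightarrow> (real^2^2) set" where
  "M2 m = S1 m \<union> S2 m"

definition rcoset_G :: "real^2^2 \<Rightarrow> (real^2^2) set" where
  "rcoset_G g = {h ** g | h. h \<in> Gamma0_2_plus}"

end

theory Submission
  imports Defs
begin

lemma mat2_nth: "mat2 a b c d $ 1 $ 1 = a" "mat2 a b c d $ 1 $ 2 = b" "mat2 a b c d $ 2 $ 1 = c" "mat2 a b c d $ 2 $ 2 = d"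
  by (simp_all add: mat2_def)
lemma mat2_inj: "mat2 a b c d = mat2 a' b' c' d' \<longleftrightarrow> a = a' \<and> b = b' \<and> c = c' \<and> d = d'"
  by (auto simp add: vec_eq_iff forall_2 mat2_nth)
lemma mat2_mult: "mat2 a b c d ** mat2 e f g h = mat2 (a*e+b*g) (a*f+b*h) (c*e+d*g) (c*f+d*h)"
  by (simp add: vec_eq_iff forall_2 mat2_nth matrix_matrix_mult_def UNIV_2)
lemma mat2_scale: "k *\<^sub>R mat2 a b c d = mat2 (k*a) (k*b) (k*c) (k*d)"
  by (simp add: vec_eq_iff forall_2 mat2_nth)

abbreviation imat :: "int \<Rightarrow> int \<Rightarrow> int \<Rightarrow> int \<Rightarrow> real^2^2" where
  "imat a b c d \<equiv> mat2 (of_int a) (of_int b) (of_int c) (of_int d)"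

lemma imat_mult: "imat a b c d ** imat e f g h = imat (a*e+b*g) (a*f+b*h) (c*e+d*g) (c*f+d*h)"
  by (simp add: mat2_mult)
lemma imat_inj: "imat a b c d = imat a' b' c' d' \<longleftrightarrow> a = a' \<and> b = b' \<and> c = c' \<and> d = d'"
  by (simp add: mat2_inj)
lemma imat_half: "(1/2) *\<^sub>R imat (2*a) (2*b) (2*c) (2*d) = imat a b c d"
  by (simp add: mat2_scale)

lemma sq2: "sqrt 2 * sqrt 2 = (2::real)" by simp

lemma imat_w2: "imat a b c d ** w2 = (1/sqrt 2) *\<^sub>R imat (2*b) (-a) (2*d) (-c)"
  by (simp add: w2_def matrix_scalar_ac mat2_mult mat2_scale mat2_inj mult.commute)
lemma w2_imat: "w2 ** imat a b c d = (1/sqrt 2) *\<^sub>R imat (-c) (-d) (2*a) (2*b)"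
  by (simp add: w2_def scalar_matrix_assoc[symmetric] mat2_mult mat2_scale)
lemma S2_w2: "((1/sqrt 2) *\<^sub>R imat a b c d) ** w2 = (1/2) *\<^sub>R imat (2*b) (-a) (2*d) (-c)"
  by (simp add: w2_def scalar_matrix_assoc[symmetric] matrix_scalar_ac mat2_mult mat2_scale)
lemma w2_conj: "w2 ** (imat a b c d ** w2) = (1/2) *\<^sub>R imat (-2*d) c (4*b) (-2*a)"
  by (simp add: w2_def scalar_matrix_assoc[symmetric] matrix_scalar_ac mat2_mult mat2_scale)

lemma G_plus_G: "imat a b c d \<in> Gamma0_2_plus" if "a*d - b*c = 1" "even c"
  using that by (intro Gamma0_2_plus.gen_G) (auto simp: Gamma0_2_def)
lemma RED:
  fixes a b c d r s n :: int
  assumes det: "a*d - b*c = n" and npos: "n > 0" and cop: "coprime r s" and ev: "even r"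
    and rel: "r*a + s*c = 0"
    and prim: "\<forall>k. k dvd a \<and> k dvd b \<and> k dvd c \<and> k dvd d \<longrightarrow> is_unit k"
  shows "\<exists>P Q R S X Y Z. P*S - Q*R = 1 \<and> even R \<and> odd P \<and> odd S \<and> X = P*a+Q*c \<and> Y = P*b+Q*d
     \<and> 0 = R*a+S*c \<and> Z = R*b+S*d \<and> X > 0 \<and> Z > 0 \<and> X*Z = n \<and> 0 \<le> Y \<and> Y < Z
     \<and> gcd X (gcd Y Z) = 1"
proof -
  obtain u0 v0 where uv: "u0*r + v0* s = 1"
    using bezout_int[of r s] cop by (auto simp: coprime_iff_gcd_eq_1)
  define p q where "p = v0" and "q = -u0"
  have ps: "p* s - q*r = 1" using uv by (simp add: p_def q_def algebra_simps)
  define Z0 where "Z0 = r*b + s*d"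
  define X0 where "X0 = p*a + q*c"
  have "(p*a+q*c)*(r*b+s*d) - (p*b+q*d)*(r*a+s*c) = (p* s-q*r)*(a*d-b*c)"
    by (simp add: algebra_simps)
  hence XZ0: "X0 * Z0 = n" using ps rel det by (simp add: X0_def Z0_def)
  hence "Z0 \<noteq> 0" using npos by auto
  define \<sigma> where "\<sigma> = sgn Z0"
  have s2: "\<sigma> * \<sigma> = 1" using \<open>Z0 \<noteq> 0\<close> by (simp add: \<sigma>_def sgn_if)
  define p1 q1 r1 s1 where "p1 = \<sigma>*p" and "q1 = \<sigma>*q" and "r1 = \<sigma>*r" and "s1 = \<sigma>* s"
  have ps1: "p1* s1 - q1*r1 = 1"
  proof -
    have "p1* s1 - q1*r1 = (\<sigma>*\<sigma>)*(p* s-q*r)" by (simp add: p1_def q1_def r1_def s1_def algebra_simps)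
    thus ?thesis using s2 ps by simp
  qed
  define Z where "Z = r1*b + s1*d"
  have Zeq: "Z = \<sigma> * Z0" by (simp add: Z_def Z0_def r1_def s1_def algebra_simps)
  have Zpos: "Z > 0" using \<open>Z0 \<noteq> 0\<close> by (simp add: Zeq \<sigma>_def sgn_if)
  define t where "t = (p1*b+q1*d) div Z"
  define P Q where "P = p1 - t*r1" and "Q = q1 - t* s1"
  define X Y where "X = P*a+Q*c" and "Y = P*b+Q*d"
  have rel1: "r1*a + s1*c = 0"
  proof -
    have "r1*a + s1*c = \<sigma>*(r*a + s*c)" by (simp add: r1_def s1_def algebra_simps)
    thus ?thesis using rel by simp
  qed
  have PS: "P* s1 - Q*r1 = 1" using ps1 by (simp add: P_def Q_def algebra_simps)
  have Xeq: "X = p1*a + q1*c"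
  proof -
    have "X = p1*a + q1*c - t*(r1*a+s1*c)" by (simp add: X_def P_def Q_def algebra_simps)
    thus ?thesis using rel1 by simp
  qed
  have Yeq: "Y = (p1*b+q1*d) mod Z"
  proof -
    have "Y = (p1*b+q1*d) - t*Z" by (simp add: Y_def P_def Q_def Z_def algebra_simps)
    thus ?thesis by (metis t_def minus_div_mult_eq_mod)
  qed
  have XZ: "X*Z = n"
  proof -
    have "X*Z = (\<sigma>*\<sigma>)*(X0*Z0)" by (simp add: Xeq Zeq X0_def p1_def q1_def algebra_simps)
    thus ?thesis using s2 XZ0 by simp
  qed
  have Xpos: "X > 0" using XZ Zpos npos by (smt (verit) mult_nonpos_nonneg)
  have r1e: "even r1" using ev by (simp add: r1_def)
  have oddPS: "odd (P* s1)"
  proof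
    assume "even (P* s1)"
    hence "even (P* s1 - Q*r1)" using r1e by simp
    thus False using PS by simp
  qed
  have gX: "gcd X (gcd Y Z) = 1"
  proof -
    define k where "k = gcd X (gcd Y Z)"
    have kX: "k dvd X" and kY: "k dvd Y" and kZ: "k dvd Z" unfolding k_def by (meson dvd_trans gcd_dvd1 gcd_dvd2)+
    have ea0: "s1*X - Q*(r1*a+s1*c) = (P* s1 - Q*r1)*a" by (simp add: X_def algebra_simps)
    have ea: "a = s1*X - Q*(r1*a+s1*c)" using ea0 PS by simp
    have ec0: "P*(r1*a+s1*c) - r1*X = (P* s1 - Q*r1)*c" by (simp add: X_def algebra_simps)
    have ec: "c = P*(r1*a+s1*c) - r1*X" using ec0 PS by simp
    have eb0: "s1*Y - Q*Z = (P* s1 - Q*r1)*b" by (simp add: Y_def Z_def algebra_simps)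
    have eb: "b = s1*Y - Q*Z" using eb0 PS by simp
    have ed0: "P*Z - r1*Y = (P* s1 - Q*r1)*d" by (simp add: Y_def Z_def algebra_simps)
    have ed: "d = P*Z - r1*Y" using ed0 PS by simp
    have "k dvd a" using kX ea rel1 by simp
    moreover have "k dvd c" using kX ec rel1 by simp
    moreover have "k dvd b" using kY kZ eb by simp
    moreover have "k dvd d" using kY kZ ed by simp
    ultimately have "is_unit k" using prim by blast
    moreover have "k \<ge> 0" by (simp add: k_def)
    ultimately show ?thesis unfolding k_def by simp
  qed
  have Yr: "0 \<le> Y" "Y < Z" using Yeq Zpos by simp_all
  show ?thesis
    apply (rule exI[of _ P], rule exI[of _ Q], rule exI[of _ r1], rule exI[of _ s1])
    apply (rule exI[of _ X], rule exI[of _ Y], rule exI[of _ Z])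
    using PS r1e oddPS rel1 XZ Xpos Zpos gX Yr
    by (simp add: X_def Y_def Z_def)
qed

lemma H1:
  fixes a b c d n :: int
  assumes det: "a*d - b*c = n" and npos: "n > 0" and oa: "odd a" and ec: "even c"
    and prim: "\<forall>k. k dvd a \<and> k dvd b \<and> k dvd c \<and> k dvd d \<longrightarrow> is_unit k"
  shows "\<exists>h\<in>Gamma0_2_plus. \<exists>\<gamma>\<in>M1 n. imat a b c d = h ** \<gamma>"
proof -
  define g where "g = gcd a c"
  have a0: "a \<noteq> 0" using oa by auto
  have g0: "g \<noteq> 0" using a0 by (simp add: g_def)
  obtain a' where ga: "a = g * a'" unfolding g_def by (meson gcd_dvd1 dvd_def)
  obtain c' where gc: "c = g * c'" unfolding g_def by (meson gcd_dvd2 dvd_def)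
  have ad: "a div g = a'" using ga g0 by simp
  have cd: "c div g = c'" using gc g0 by simp
  have og: "odd g" using oa ga by simp
  have ecg: "even c'" using ec og gc by simp
  define r s where "r = - c'" and "s = a'"
  have cop: "coprime r s" using div_gcd_coprime[of a c] a0 ad cd
    by (simp add: r_def s_def g_def coprime_commute)
  have er: "even r" using ecg by (simp add: r_def)
  have rel: "r*a + s*c = 0" unfolding r_def s_def ga gc by (simp add: algebra_simps)
  obtain P Q R S X Y Z where H: "P*S - Q*R = 1" "even R" "odd P" "odd S" "X = P*a+Q*c" "Y = P*b+Q*d"
     "0 = R*a+S*c" "Z = R*b+S*d" "X > 0" "Z > 0" "X*Z = n" "0 \<le> Y" "Y < Z" "gcd X (gcd Y Z) = 1"
    using RED[OF det npos cop er rel] prim by (metis (no_types))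
  have R0: "R*a+S*c = 0" using H(7) by simp
  have e1: "S*X + (-Q)*0 = a"
  proof -
    have "S*X - Q*(R*a+S*c) = (P*S-Q*R)*a" by (simp add: H(5) algebra_simps)
    thus ?thesis using H(1) R0 by simp
  qed
  have e2: "S*Y + (-Q)*Z = b"
  proof -
    have "S*Y + (-Q)*Z = (P*S-Q*R)*b" by (simp add: H(6,8) algebra_simps)
    thus ?thesis using H(1) R0 by simp
  qed
  have e3: "(-R)*X + P*0 = c"
  proof -
    have "P*(R*a+S*c) - R*X = (P*S-Q*R)*c" by (simp add: H(5) algebra_simps)
    thus ?thesis using H(1) R0 by simp
  qed
  have e4: "(-R)*Y + P*Z = d"
  proof -
    have "(-R)*Y + P*Z = (P*S-Q*R)*d" by (simp add: H(6,8) algebra_simps)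
    thus ?thesis using H(1) R0 by simp
  qed
  have hG: "imat S (-Q) (-R) P \<in> Gamma0_2_plus"
    by (rule G_plus_G) (use H(1,2) in \<open>simp_all add: algebra_simps\<close>)
  have oX: "odd X" using H(3,5) oa ec by simp
  have gM: "imat X Y 0 Z \<in> M1 n" unfolding M1_def by (rule CollectI, rule exI[of _ X], rule exI[of _ Y], rule exI[of _ Z]) (use H(9-14) oX in simp)
  have "imat a b c d = imat S (-Q) (-R) P ** imat X Y 0 Z"
    unfolding imat_mult using e1 e2 e3 e4 by simp
  with hG gM show ?thesis by blast
qed



lemma odd_dvd_2: fixes k y :: int assumes "odd k" "k dvd 2*y" shows "k dvd y"
proof -
  have "coprime k 2" using assms(1) by (simp add: coprime_commute)
  thus ?thesis using assms(2) coprime_dvd_mult_right_iff by blast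
qed

lemma unit_from_gcd: fixes k x y z :: int assumes "gcd x (gcd y z) = 1" "k dvd x" "k dvd y" "k dvd z"
  shows "is_unit k"
  using assms by (metis gcd_greatest)

lemma FWD:
  fixes n :: int
  assumes npos: "n > 0" and ev: "even n" and g2: "\<gamma>2 \<in> M2 n"
  shows "\<exists>h\<in>Gamma0_2_plus. \<exists>\<gamma>1\<in>M1 n. \<gamma>2 ** w2 = h ** \<gamma>1"
proof (cases "\<gamma>2 \<in> S1 n")
  case True
  then obtain x y z where xyz: "\<gamma>2 = mat2 (of_int x) (of_int y) 0 (of_int z)" "x > 0" "z > 0" "x*z = n"
    "0 \<le> y" "y < z" "gcd x (gcd y z) = 1" "odd z" using True unfolding S1_def by auto
  have e1: "\<gamma>2 ** w2 = w2 ** imat z 0 (-2*y) x"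
    using xyz(1) imat_w2[of x y 0 z] w2_imat[of z 0 "-2*y" x] by simp
  have det: "z * x - 0 * (- 2 * y) = n" using xyz by (simp add: mult.commute)
  have prim: "\<forall>k. k dvd z \<and> k dvd 0 \<and> k dvd - 2 * y \<and> k dvd x \<longrightarrow> is_unit k"
  proof (intro allI impI)
    fix k :: int assume k: "k dvd z \<and> k dvd 0 \<and> k dvd - 2 * y \<and> k dvd x"
    have "odd k"
    proof
      assume "even k"
      hence "even z" using k dvd_trans[of 2 k z] by simp
      thus False using xyz(8) by simp
    qed
    moreover have "k dvd 2*y" using k by simp
    ultimately have "k dvd y" using odd_dvd_2[of k y] by blast
    thus "is_unit k" using k by (intro unit_from_gcd[OF xyz(7)]) auto
  qed
  have "\<exists>h\<in>Gamma0_2_plus. \<exists>\<gamma>\<in>M1 n. imat z 0 (-2*y) x = h ** \<gamma>"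
    by (rule H1[OF det npos _ _ prim]) (use xyz in auto)
  then obtain h \<gamma> where h: "h \<in> Gamma0_2_plus" "\<gamma> \<in> M1 n" "imat z 0 (-2*y) x = h ** \<gamma>" by blast
  have "\<gamma>2 ** w2 = (w2 ** h) ** \<gamma>" using e1 h(3) by (simp add: matrix_mul_assoc)
  moreover have "w2 ** h \<in> Gamma0_2_plus" using h(1) by (simp add: Gamma0_2_plus.mult Gamma0_2_plus.gen_w)
  ultimately show ?thesis using h(2) by blast
next
  case False
  hence "\<gamma>2 \<in> S2 n" using g2 by (simp add: M2_def)
  then obtain x y z where xyz: "\<gamma>2 = (1 / sqrt 2) *\<^sub>R mat2 (of_int x) (of_int y) 0 (of_int z)" "x > 0" "z > 0"
    "x*z = 2*n" "0 \<le> y" "y < z" "gcd x (gcd y z) = 1" "even x" "even z" using \<open>\<gamma>2 \<in> S2 n\<close> unfolding S2_def by auto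
  obtain x' where x': "x = 2*x'" using xyz(8) by blast
  have oy: "odd y"
  proof
    assume "even y"
    hence "is_unit (2::int)" using xyz(7-9) unit_from_gcd[of x y z 2] by simp
    thus False by simp
  qed
  have e1: "\<gamma>2 ** w2 = imat y (-x') z 0"
  proof -
    have "\<gamma>2 ** w2 = (1/2) *\<^sub>R imat (2*y) (-x) (2*z) (-0)" using xyz(1) S2_w2[of x y 0 z] by simp
    also have "\<dots> = (1/2) *\<^sub>R imat (2*y) (2*(-x')) (2*z) (2*0)" using x' by simp
    also have "\<dots> = imat y (-x') z 0" by (rule imat_half)
    finally show ?thesis .
  qed
  have "\<exists>h\<in>Gamma0_2_plus. \<exists>\<gamma>\<in>M1 n. imat y (-x') z 0 = h ** \<gamma>"
  proof (rule H1)
    show "y * 0 - (-x') * z = n" using xyz(4) x' by simp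
    show "\<forall>k. k dvd y \<and> k dvd -x' \<and> k dvd z \<and> k dvd 0 \<longrightarrow> is_unit k"
    proof (intro allI impI)
      fix k :: int assume k: "k dvd y \<and> k dvd -x' \<and> k dvd z \<and> k dvd 0"
      hence "k dvd x" using x' by simp
      thus "is_unit k" using k by (intro unit_from_gcd[OF xyz(7)]) auto
    qed
  qed (use npos xyz oy in auto)
  then obtain h \<gamma> where h: "h \<in> Gamma0_2_plus" "\<gamma> \<in> M1 n" "imat y (-x') z 0 = h ** \<gamma>" by blast
  show ?thesis using e1 h by metis
qed
lemma BWD:
  fixes n :: int
  assumes npos: "n > 0" and ev: "even n" and g1: "\<gamma>1 \<in> M1 n"
  shows "\<exists>\<gamma>2\<in>M2 n. \<exists>h\<in>Gamma0_2_plus. \<gamma>1 = h ** (\<gamma>2 ** w2)"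
proof -
  obtain x y z where xyz: "\<gamma>1 = mat2 (of_int x) (of_int y) 0 (of_int z)" "x > 0" "z > 0" "x*z = n"
    "0 \<le> y" "y < z" "gcd x (gcd y z) = 1" "odd x" using g1 unfolding M1_def by auto
  have ez: "even z" using ev xyz(4,8) by auto
  define e where "e = gcd y z"
  have e0: "e \<noteq> 0" using xyz(3) by (simp add: e_def)
  obtain y' where y': "y = e * y'" unfolding e_def by (meson gcd_dvd1 dvd_def)
  obtain z' where z': "z = e * z'" unfolding e_def by (meson gcd_dvd2 dvd_def)
  have cop: "coprime y' z'"
  proof -
    have "coprime (y div e) (z div e)" using div_gcd_coprime[of y z] xyz(3) by (simp add: e_def)
    moreover have "y div e = y'" using y' e0 by simp
    moreover have "z div e = z'" using z' e0 by simp
    ultimately show ?thesis by simp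
  qed
  have primx: "\<And>k. k dvd x \<Longrightarrow> k dvd 2*y \<Longrightarrow> k dvd 2*z \<Longrightarrow> is_unit k"
  proof -
    fix k :: int assume k: "k dvd x" "k dvd 2*y" "k dvd 2*z"
    have ok: "odd k"
    proof
      assume "even k"
      hence "even x" using k dvd_trans[of 2 k x] by simp
      thus False using xyz(8) by simp
    qed
    have "k dvd y" using odd_dvd_2[OF ok k(2)] .
    moreover have "k dvd z" using odd_dvd_2[OF ok k(3)] .
    ultimately show "is_unit k" using k by (intro unit_from_gcd[OF xyz(7)]) auto
  qed
  show ?thesis
  proof (cases "even z'")
    case True
    have cop2: "coprime z' (-y')" using cop by (simp add: coprime_commute)
    have rel: "z' * (2*y) + (-y') * (2*z) = 0" unfolding y' z' by (simp add: algebra_simps)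
    have det: "(2*y) * 0 - (-x) * (2*z) = 2*n" using xyz(4) by simp
    have prim: "\<forall>k. k dvd 2*y \<and> k dvd -x \<and> k dvd 2*z \<and> k dvd 0 \<longrightarrow> is_unit k"
      using primx by auto
    obtain P Q R S X Y Z where H: "P*S - Q*R = 1" "even R" "odd P" "odd S" "X = P*(2*y)+Q*(2*z)"
      "Y = P*(-x)+Q*0" "0 = R*(2*y)+S*(2*z)" "Z = R*(-x)+S*0" "X > 0" "Z > 0" "X*Z = 2*n"
      "0 \<le> Y" "Y < Z" "gcd X (gcd Y Z) = 1"
      using RED[OF det _ cop2 True rel] prim npos by (metis (no_types) mult_pos_pos zero_less_numeral)
    have R0: "R*(2*y)+S*(2*z) = 0" using H(7) by simp
    define \<gamma>2 where "\<gamma>2 = (1 / sqrt 2) *\<^sub>R mat2 (of_int X) (of_int Y) 0 (of_int Z)"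
    have g2: "\<gamma>2 \<in> M2 n" unfolding M2_def S2_def \<gamma>2_def
      by (rule UnI2, rule CollectI, rule exI[of _ X], rule exI[of _ Y], rule exI[of _ Z])
         (use H(2,5,8-14) in auto)
    have hG: "imat (-S) Q R (-P) \<in> Gamma0_2_plus"
      by (rule G_plus_G) (use H(1,2) in \<open>simp_all add: algebra_simps\<close>)
    have i1: "(-S)*(2*Y) + Q*(2*Z) = 2*x"
    proof -
      have "(-S)*(2*Y) + Q*(2*Z) = (P*S-Q*R)*(2*x)" by (simp add: H(6,8) algebra_simps)
      thus ?thesis using H(1) by simp
    qed
    have i2: "(-S)*(-X) + Q*(-0) = 2*y"
    proof -
      have "(-S)*(-X) + Q*(-0) - Q*(R*(2*y)+S*(2*z)) = (P*S-Q*R)*(2*y)" by (simp add: H(5) algebra_simps)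
      thus ?thesis using H(1) R0 by simp
    qed
    have i3: "R*(2*Y) + (-P)*(2*Z) = 2*0" by (simp add: H(6,8) algebra_simps)
    have i4: "R*(-X) + (-P)*(-0) = 2*z"
    proof -
      have "R*(-X) + (-P)*(-0) + P*(R*(2*y)+S*(2*z)) = (P*S-Q*R)*(2*z)" by (simp add: H(5) algebra_simps)
      thus ?thesis using H(1) R0 by simp
    qed
    have "imat (-S) Q R (-P) ** (\<gamma>2 ** w2) = (1/2) *\<^sub>R (imat (-S) Q R (-P) ** imat (2*Y) (-X) (2*Z) (-0))"
    proof -
      have gw: "\<gamma>2 ** w2 = (1/2) *\<^sub>R imat (2*Y) (-X) (2*Z) (-0)"
        using S2_w2[of X Y 0 Z] unfolding \<gamma>2_def by simp
      show ?thesis unfolding gw by (simp add: matrix_scalar_ac scalar_matrix_assoc[symmetric])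
    qed
    also have "\<dots> = (1/2) *\<^sub>R imat (2*x) (2*y) (2*0) (2*z)"
      unfolding imat_mult i1 i2 i3 i4 ..
    also have "\<dots> = \<gamma>1" unfolding imat_half xyz(1) by simp
    finally show ?thesis using g2 hG by metis
  next
    case False
    have cop2: "coprime (2*y') z'" using cop False by simp
    have er: "even (2*y')" by simp
    have rel: "(2*y') * z + z' * (-2*y) = 0" unfolding y' z' by (simp add: algebra_simps)
    have det: "z * x - 0 * (-2*y) = n" using xyz(4) by (simp add: mult.commute)
    have prim: "\<forall>k. k dvd z \<and> k dvd 0 \<and> k dvd -2*y \<and> k dvd x \<longrightarrow> is_unit k"
      using primx by auto
    obtain P Q R S X Y Z where H: "P*S - Q*R = 1" "even R" "odd P" "odd S" "X = P*z+Q*(-2*y)"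
      "Y = P*0+Q*x" "0 = R*z+S*(-2*y)" "Z = R*0+S*x" "X > 0" "Z > 0" "X*Z = n"
      "0 \<le> Y" "Y < Z" "gcd X (gcd Y Z) = 1"
      using RED[OF det npos cop2 er rel] prim by (metis (no_types))
    have R0: "R*z+S*(-2*y) = 0" using H(7) by simp
    define \<gamma>2 where "\<gamma>2 = mat2 (of_int X) (of_int Y) 0 (of_int Z)"
    have oZ: "odd Z" using H(4,8) xyz(8) by simp
    have g2: "\<gamma>2 \<in> M2 n" unfolding M2_def S1_def \<gamma>2_def
      by (rule UnI1, rule CollectI, rule exI[of _ X], rule exI[of _ Y], rule exI[of _ Z])
         (use H(9-14) oZ in auto)
    have hG: "imat (-S) Q R (-P) \<in> Gamma0_2_plus"
      by (rule G_plus_G) (use H(1,2) in \<open>simp_all add: algebra_simps\<close>)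
    have hG2: "w2 ** imat (-S) Q R (-P) \<in> Gamma0_2_plus"
      using hG by (simp add: Gamma0_2_plus.mult Gamma0_2_plus.gen_w)
    have i1: "-2*(R*Y + (-P)*Z) = 2*x"
    proof -
      have "-2*(R*Y + (-P)*Z) = (P*S-Q*R)*(2*x)" by (simp add: H(6,8) algebra_simps)
      thus ?thesis using H(1) by simp
    qed
    have i2: "R*X + (-P)*0 = 2*y"
    proof -
      have "R*X + (-P)*0 - P*(R*z+S*(-2*y)) = (P*S-Q*R)*(2*y)" by (simp add: H(5) algebra_simps)
      thus ?thesis using H(1) R0 by simp
    qed
    have i3: "4*((-S)*Y + Q*Z) = 2*0" by (simp add: H(6,8) algebra_simps)
    have i4: "-2*((-S)*X + Q*0) = 2*z"
    proof -
      have "-2*((-S)*X + Q*0) - 2*Q*(R*z+S*(-2*y)) = (P*S-Q*R)*(2*z)" by (simp add: H(5) algebra_simps)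
      thus ?thesis using H(1) R0 by simp
    qed
    have "(w2 ** imat (-S) Q R (-P)) ** (\<gamma>2 ** w2) = w2 ** ((imat (-S) Q R (-P) ** imat X Y 0 Z) ** w2)"
      unfolding \<gamma>2_def by (simp add: matrix_mul_assoc)
    also have "\<dots> = (1/2) *\<^sub>R imat (-2*(R*Y + (-P)*Z)) (R*X + (-P)*0) (4*((-S)*Y + Q*Z)) (-2*((-S)*X + Q*0))"
      unfolding imat_mult w2_conj ..
    also have "\<dots> = (1/2) *\<^sub>R imat (2*x) (2*y) (2*0) (2*z)"
      unfolding i1 i2 i3 i4 ..
    also have "\<dots> = \<gamma>1" unfolding imat_half xyz(1) by simp
    finally show ?thesis using g2 hG2 by metis
  qed
qed

theorem lemma2p7:
  fixes m :: int
  assumes "m > 0" and "even m"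
  shows "(\<Union>\<gamma>\<in>M1 m. rcoset_G \<gamma>) = (\<Union>\<gamma>\<in>M2 m. rcoset_G (\<gamma> ** w2))"
proof (rule set_eqI, rule iffI)
  fix A assume "A \<in> (\<Union>\<gamma>\<in>M1 m. rcoset_G \<gamma>)"
  then obtain \<gamma>1 h where g1: "\<gamma>1 \<in> M1 m" "h \<in> Gamma0_2_plus" "A = h ** \<gamma>1"
    unfolding rcoset_G_def by blast
  obtain \<gamma>2 h' where g2: "\<gamma>2 \<in> M2 m" "h' \<in> Gamma0_2_plus" "\<gamma>1 = h' ** (\<gamma>2 ** w2)"
    using BWD[OF assms g1(1)] by blast
  have "A = (h ** h') ** (\<gamma>2 ** w2)" using g1(3) g2(3) by (simp add: matrix_mul_assoc)
  moreover have "h ** h' \<in> Gamma0_2_plus" using g1(2) g2(2) by (rule Gamma0_2_plus.mult)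
  ultimately show "A \<in> (\<Union>\<gamma>\<in>M2 m. rcoset_G (\<gamma> ** w2))"
    using g2(1) unfolding rcoset_G_def by blast
next
  fix A assume "A \<in> (\<Union>\<gamma>\<in>M2 m. rcoset_G (\<gamma> ** w2))"
  then obtain \<gamma>2 h where g2: "\<gamma>2 \<in> M2 m" "h \<in> Gamma0_2_plus" "A = h ** (\<gamma>2 ** w2)"
    unfolding rcoset_G_def by blast
  obtain h' \<gamma>1 where g1: "h' \<in> Gamma0_2_plus" "\<gamma>1 \<in> M1 m" "\<gamma>2 ** w2 = h' ** \<gamma>1"
    using FWD[OF assms g2(1)] by blast
  have "A = (h ** h') ** \<gamma>1" using g1(3) g2(3) by (simp add: matrix_mul_assoc)
  moreover have "h ** h' \<in> Gamma0_2_plus" using g2(2) g1(1) by (rule Gamma0_2_plus.mult)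
  ultimately show "A \<in> (\<Union>\<gamma>\<in>M1 m. rcoset_G \<gamma>)"
    using g1(2) unfolding rcoset_G_def by blast
qed

end
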